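(* Let $A,B,C$ be finite-dimensional quantum systems, $C'$ a copy of $C$, and let $\Lambda^{C\to AB}$ be a channel extension of a channel $\Lambda^{C\to B}$. Then $\Lambda^{C\to AB}$ is an incoherent extension of $\Lambda^{C\to B}$ if and only if the Choi–Jamiołkowski state $J_{C'AB}(\Lambda^{C\to AB})$ is separable with respect to the bipartition $A : BC'$.
   Context: A channel extension of $\Lambda^{C\to B}$ is a channel (completely positive trace-preserving map) $\Lambda^{C\to AB}$ with $\mathrm{Tr}_A\circ\Lambda^{C\to AB}=\Lambda^{C\to B}$. An instrument is a collection $\{\Lambda_\lambda\}_\lambda$ of completely positive maps whose sum is a channel. The extension is incoherent if there exist an instrument $\{\Lambda^{C\to B}_\lambda\}_\lambda$ and unit-trace density operators $\{\sigma^A_\lambda\}_\lambda$ such that $\Lambda^{C\to AB}[X]=\sum_\lambda\Lambda^{C\to B}_\lambda[X]\otimes\sigma^A_\lambda$ for all $X$. The Choi–Jamiołkowski operator of a map $\Gamma^{C\to Y}$ is $J_{C'Y}(\Gamma)=(\mathrm{id}_{C'}\otimes\Gamma)[\psi_+^{CC'}]$, where $\psi_+^{CC'}$ is a fixed maximally entangled pure state of $C$ and $C'$. A state on $A\otimes(BC')$ is $A:BC'$-separable if it is a convex combination of product states $\tau^A\otimes\omega^{BC'}$. *)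

theory Defs
  imports Complex_Main "Jordan_Normal_Form.Matrix"
begin

text \<open>Finite-dimensional quantum systems are modelled by their dimensions; operators
on a system of dimension d are complex d x d matrices (type complex mat).
Composite systems use the Kronecker ordering: index of (i,j) in dim d1*d2 is i*d2+j.\<close>

definition kron :: "complex mat \<Rightarrow> complex mat \<Rightarrow> complex mat" where
  "kron M N = mat (dim_row M * dim_row N) (dim_col M * dim_col N)
     (\<lambda>(i,j). M $$ (i div dim_row N, j div dim_col N) * N $$ (i mod dim_row N, j mod dim_col N))"

definition psd :: "nat \<Rightarrow> complex mat \<Rightarrow> bool" where
  "psd d M \<longleftrightarrow> M \<in> carrier_mat d d \<and>
     (\<forall>v \<in> carrier_vec d. let q = (\<Sum>i<d. cnj (v $ i) * (M *\<^sub>v v) $ i) in Im q = 0 \<and> Re q \<ge> 0)"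

definition mtrace :: "complex mat \<Rightarrow> complex" where
  "mtrace M = (\<Sum>i<dim_row M. M $$ (i, i))"

definition density :: "nat \<Rightarrow> complex mat \<Rightarrow> bool" where
  "density d \<rho> \<longleftrightarrow> psd d \<rho> \<and> mtrace \<rho> = 1"

definition msum :: "nat \<Rightarrow> nat \<Rightarrow> ('l \<Rightarrow> complex mat) \<Rightarrow> 'l set \<Rightarrow> complex mat" where
  "msum r c f L = mat r c (\<lambda>ij. \<Sum>l\<in>L. f l $$ ij)"

definition lin_map :: "nat \<Rightarrow> nat \<Rightarrow> (complex mat \<Rightarrow> complex mat) \<Rightarrow> bool" where
  "lin_map dX dY \<Gamma> \<longleftrightarrow>
     (\<forall>X \<in> carrier_mat dX dX. \<Gamma> X \<in> carrier_mat dY dY) \<and>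
     (\<forall>X \<in> carrier_mat dX dX. \<forall>Y \<in> carrier_mat dX dX. \<Gamma> (X + Y) = \<Gamma> X + \<Gamma> Y) \<and>
     (\<forall>X \<in> carrier_mat dX dX. \<forall>c. \<Gamma> (c \<cdot>\<^sub>m X) = c \<cdot>\<^sub>m \<Gamma> X)"

text \<open>(id_n \<otimes> \<Gamma>) applied to an operator on an n*dX-dimensional system (id factor first):
  block (p,q) of the result is \<Gamma> applied to block (p,q) of the input.\<close>
definition blk :: "nat \<Rightarrow> complex mat \<Rightarrow> nat \<Rightarrow> nat \<Rightarrow> complex mat" where
  "blk dX X p q = mat dX dX (\<lambda>(i,j). X $$ (p * dX + i, q * dX + j))"

definition id_tensor :: "nat \<Rightarrow> nat \<Rightarrow> nat \<Rightarrow> (complex mat \<Rightarrow> complex mat) \<Rightarrow> complex mat \<Rightarrow> complex mat" where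
  "id_tensor n dX dY \<Gamma> X = mat (n * dY) (n * dY)
     (\<lambda>(r,s). \<Gamma> (blk dX X (r div dY) (s div dY)) $$ (r mod dY, s mod dY))"

definition completely_positive :: "nat \<Rightarrow> nat \<Rightarrow> (complex mat \<Rightarrow> complex mat) \<Rightarrow> bool" where
  "completely_positive dX dY \<Gamma> \<longleftrightarrow> lin_map dX dY \<Gamma> \<and>
     (\<forall>n>0. \<forall>X. psd (n * dX) X \<longrightarrow> psd (n * dY) (id_tensor n dX dY \<Gamma> X))"

definition channel :: "nat \<Rightarrow> nat \<Rightarrow> (complex mat \<Rightarrow> complex mat) \<Rightarrow> bool" where
  "channel dX dY \<Gamma> \<longleftrightarrow> completely_positive dX dY \<Gamma> \<and>
     (\<forall>X \<in> carrier_mat dX dX. mtrace (\<Gamma> X) = mtrace X)"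

definition ptrace_first :: "nat \<Rightarrow> nat \<Rightarrow> complex mat \<Rightarrow> complex mat" where
  "ptrace_first dA dB M = mat dB dB (\<lambda>(b,b'). \<Sum>a<dA. M $$ (a * dB + b, a * dB + b'))"

definition channel_extension ::
  "nat \<Rightarrow> nat \<Rightarrow> nat \<Rightarrow> (complex mat \<Rightarrow> complex mat) \<Rightarrow> (complex mat \<Rightarrow> complex mat) \<Rightarrow> bool" where
  "channel_extension dA dB dC \<Lambda>AB \<Lambda>B \<longleftrightarrow> channel dC (dA * dB) \<Lambda>AB \<and> channel dC dB \<Lambda>B \<and>
     (\<forall>X \<in> carrier_mat dC dC. ptrace_first dA dB (\<Lambda>AB X) = \<Lambda>B X)"

definition instrument :: "nat \<Rightarrow> nat \<Rightarrow> 'l set \<Rightarrow> ('l \<Rightarrow> complex mat \<Rightarrow> complex mat) \<Rightarrow> bool" where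
  "instrument dX dY L \<Lambda>s \<longleftrightarrow> finite L \<and> (\<forall>l\<in>L. completely_positive dX dY (\<Lambda>s l)) \<and>
     channel dX dY (\<lambda>X. msum dY dY (\<lambda>l. \<Lambda>s l X) L)"

definition incoherent_extension ::
  "nat \<Rightarrow> nat \<Rightarrow> nat \<Rightarrow> (complex mat \<Rightarrow> complex mat) \<Rightarrow> bool" where
  "incoherent_extension dA dB dC \<Lambda>AB \<longleftrightarrow>
     (\<exists>(L :: nat set) \<Lambda>s \<sigma>. instrument dC dB L \<Lambda>s \<and> (\<forall>l\<in>L. density dA (\<sigma> l)) \<and>
        (\<forall>X \<in> carrier_mat dC dC. \<Lambda>AB X = msum (dA * dB) (dA * dB) (\<lambda>l. kron (\<sigma> l) (\<Lambda>s l X)) L))"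

text \<open>Maximally entangled state psi_+ on C \<otimes> C' (dimension dC*dC), |psi+> = (1/sqrt dC) sum_i |i>|i>.\<close>
definition max_ent :: "nat \<Rightarrow> complex mat" where
  "max_ent d = mat (d * d) (d * d)
     (\<lambda>(r,s). if r div d = r mod d \<and> s div d = s mod d then 1 / of_nat d else 0)"

text \<open>Choi-Jamiolkowski operator J_{C'Y}(\<Gamma>) = (id_{C'} \<otimes> \<Gamma>)[psi_+], ordered C' then Y.\<close>
definition choi :: "nat \<Rightarrow> nat \<Rightarrow> (complex mat \<Rightarrow> complex mat) \<Rightarrow> complex mat" where
  "choi dC dY \<Gamma> = id_tensor dC dC dY \<Gamma> (max_ent dC)"

text \<open>Product operator tau^A \<otimes> omega^{BC'} written on the ordering C' \<otimes> A \<otimes> B;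
  omega is given on the ordering C' \<otimes> B (dimension dC*dB).\<close>
definition prod_A_BC :: "nat \<Rightarrow> nat \<Rightarrow> nat \<Rightarrow> complex mat \<Rightarrow> complex mat \<Rightarrow> complex mat" where
  "prod_A_BC dA dB dC \<tau> \<omega> = mat (dC * (dA * dB)) (dC * (dA * dB))
     (\<lambda>(r,s). let c = r div (dA * dB); a = (r mod (dA * dB)) div dB; b = r mod dB;
                 c' = s div (dA * dB); a' = (s mod (dA * dB)) div dB; b' = s mod dB
             in \<tau> $$ (a, a') * \<omega> $$ (c * dB + b, c' * dB + b'))"

definition separable_A_BC :: "nat \<Rightarrow> nat \<Rightarrow> nat \<Rightarrow> complex mat \<Rightarrow> bool" where
  "separable_A_BC dA dB dC \<rho> \<longleftrightarrow>
     (\<exists>(K :: nat set) p \<tau> \<omega>. finite K \<and> (\<forall>k\<in>K. p k \<ge> (0::real)) \<and> (\<Sum>k\<in>K. p k) = 1 \<and>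
        (\<forall>k\<in>K. density dA (\<tau> k) \<and> density (dC * dB) (\<omega> k)) \<and>
        \<rho> = msum (dC * (dA * dB)) (dC * (dA * dB))
               (\<lambda>k. complex_of_real (p k) \<cdot>\<^sub>m prod_A_BC dA dB dC (\<tau> k) (\<omega> k)) K)"

end

theory Submission
  imports Defs
begin


definition nn :: "complex \<Rightarrow> bool" where "nn q \<longleftrightarrow> Im q = 0 \<and> 0 \<le> Re q"

definition qf :: "nat \<Rightarrow> (nat \<Rightarrow> nat \<Rightarrow> complex) \<Rightarrow> (nat \<Rightarrow> complex) \<Rightarrow> complex" where
  "qf d W f = (\<Sum>i<d. \<Sum>j<d. cnj (f i) * W i j * f j)"

lemma sum_prod_split: "(\<Sum>r<a*b. g r) = (\<Sum>i<a. \<Sum>j<b. g (i*b+j))" for a b :: nat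
proof -
  have "(\<Sum>r<a*b. g r) = (\<Sum>i<a. sum g {i*b..<i*b+b})"
    using sum.nat_group[of g b a] by (simp add: lessThan_atLeast0)
  also have "\<dots> = (\<Sum>i<a. \<Sum>j<b. g (i*b+j))"
  proof (rule sum.cong[OF refl])
    fix i assume "i \<in> {..<a}"
    have "sum g {i*b..<i*b+b} = sum g {0+i*b..<b+i*b}" by (simp add: add.commute)
    also have "\<dots> = (\<Sum>j=0..<b. g (j+i*b))" by (rule sum.shift_bounds_nat_ivl)
    finally show "sum g {i*b..<i*b+b} = (\<Sum>j<b. g (i*b+j))" by (simp add: atLeast0LessThan add.commute)
  qed
  finally show ?thesis .
qed

lemma psd_iff: "psd d M \<longleftrightarrow> M \<in> carrier_mat d d \<and> (\<forall>f. nn (qf d (\<lambda>i j. M $$ (i,j)) f))"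
proof -
  have key: "(\<Sum>i<d. cnj (v $ i) * (M *\<^sub>v v) $ i) = qf d (\<lambda>i j. M $$ (i,j)) (\<lambda>i. v $ i)"
    if "M \<in> carrier_mat d d" "v \<in> carrier_vec d" for v
    using that unfolding qf_def
    by (intro sum.cong refl) (auto simp: mult_mat_vec_def scalar_prod_def sum_distrib_left mult.assoc intro!: sum.cong)
  show ?thesis
  proof
    assume "psd d M"
    hence M: "M \<in> carrier_mat d d" and h: "\<forall>v\<in>carrier_vec d. nn (\<Sum>i<d. cnj (v $ i) * (M *\<^sub>v v) $ i)"
      unfolding psd_def nn_def Let_def by auto
    have "nn (qf d (\<lambda>i j. M $$ (i,j)) f)" for f
    proof -
      have "qf d (\<lambda>i j. M $$ (i,j)) f = qf d (\<lambda>i j. M $$ (i,j)) (\<lambda>i. vec d f $ i)"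
        unfolding qf_def by (intro sum.cong refl) auto
      thus ?thesis using h[rule_format, of "vec d f"] key[OF M, of "vec d f"] by auto
    qed
    with M show "M \<in> carrier_mat d d \<and> (\<forall>f. nn (qf d (\<lambda>i j. M $$ (i,j)) f))" by auto
  next
    assume "M \<in> carrier_mat d d \<and> (\<forall>f. nn (qf d (\<lambda>i j. M $$ (i,j)) f))"
    thus "psd d M" unfolding psd_def Let_def using key unfolding nn_def by auto
  qed
qed



definition PSDf :: "nat \<Rightarrow> (nat \<Rightarrow> nat \<Rightarrow> complex) \<Rightarrow> bool" where
  "PSDf d W \<longleftrightarrow> (\<forall>f. nn (qf d W f))"

lemma nn_add[intro]: "nn a \<Longrightarrow> nn b \<Longrightarrow> nn (a + b)" unfolding nn_def by auto
lemma nn_sum[intro]: "(\<And>x. x \<in> S \<Longrightarrow> nn (f x)) \<Longrightarrow> nn (sum f S)"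
  by (induction S rule: infinite_finite_induct) (auto simp: nn_def)
lemma nn_0[simp]: "nn 0" unfolding nn_def by auto
lemma nn_cnj_mult[intro]: "nn (cnj z * z)" unfolding nn_def by (auto simp: algebra_simps)
lemma nn_real_mult: "nn a \<Longrightarrow> (c::real) \<ge> 0 \<Longrightarrow> nn (complex_of_real c * a)"
  unfolding nn_def by auto

lemma sum_two_support:
  assumes "i < d" "j < d" "i \<noteq> j" "\<And>a. a \<noteq> i \<Longrightarrow> a \<noteq> j \<Longrightarrow> g a = 0"
  shows "(\<Sum>a<(d::nat). g a) = g i + g j"
proof -
  have "(\<Sum>a<d. g a) = (\<Sum>a\<in>{i,j}. g a)"
    apply (rule sum.mono_neutral_right)
    using assms by auto
  thus ?thesis using assms by simp
qed

lemma sum_one_support: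
  assumes "i < d" "\<And>a. a \<noteq> i \<Longrightarrow> g a = 0"
  shows "(\<Sum>a<(d::nat). g a) = g i"
proof -
  have "(\<Sum>a<d. g a) = (\<Sum>a\<in>{i}. g a)"
    apply (rule sum.mono_neutral_right)
    using assms by auto
  thus ?thesis by simp
qed

lemma qf_one:
  assumes "i < d"
  shows "qf d W (\<lambda>k. if k = i then x else 0) = cnj x * W i i * x"
proof -
  let ?f = "\<lambda>k. if k = i then x else 0"
  have inner: "(\<Sum>b<d. cnj (?f a) * W a b * ?f b) = cnj (?f a) * W a i * x" for a
    by (subst sum_one_support[OF assms]) auto
  show ?thesis unfolding qf_def inner
    by (subst sum_one_support[OF assms]) auto
qed

lemma qf_two:
  assumes "i < d" "j < d" "i \<noteq> j"
  shows "qf d W (\<lambda>k. if k = i then x else if k = j then y else 0) =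
    cnj x * W i i * x + cnj x * W i j * y + cnj y * W j i * x + cnj y * W j j * y"
proof -
  let ?f = "\<lambda>k. if k = i then x else if k = j then y else 0"
  have inner: "(\<Sum>b<d. cnj (?f a) * W a b * ?f b) = cnj (?f a) * W a i * x + cnj (?f a) * W a j * y" for a
    by (subst sum_two_support[OF assms]) (use assms in auto)
  show ?thesis unfolding qf_def inner
    by (subst sum_two_support[OF assms]) (use assms in auto)
qed

lemma PSDf_diag: assumes "PSDf d W" "i < d" shows "Im (W i i) = 0" "Re (W i i) \<ge> 0"
  using assms(1)[unfolded PSDf_def, rule_format, of "\<lambda>k. if k = i then 1 else 0"]
  unfolding qf_one[OF assms(2)] nn_def by auto

lemma PSDf_herm: assumes "PSDf d W" "i < d" "j < d" shows "W j i = cnj (W i j)"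
proof (cases "i = j")
  case True thus ?thesis using PSDf_diag[OF assms(1,2)] by (simp add: complex_eq_iff)
next
  case False
  have d1: "Im (W i i) = 0" "Im (W j j) = 0" using PSDf_diag assms by auto
  have h1: "Im (qf d W (\<lambda>k. if k = i then 1 else if k = j then 1 else 0)) = 0"
    using assms(1) unfolding PSDf_def nn_def by blast
  have h2: "Im (qf d W (\<lambda>k. if k = i then 1 else if k = j then \<i> else 0)) = 0"
    using assms(1) unfolding PSDf_def nn_def by blast
  from h1 h2 d1 show ?thesis unfolding qf_two[OF assms(2,3) False]
    by (simp add: complex_eq_iff)
qed

lemma PSDf_zero_row: assumes "PSDf d W" "m < d" "j < d" "W m m = 0" shows "W m j = 0"
proof (cases "m = j")
  case True thus ?thesis using assms by simp
next
  case False
  have herm: "W j m = cnj (W m j)" using PSDf_herm assms by auto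
  have djj: "Im (W j j) = 0" using PSDf_diag assms by auto
  have "Re (qf d W (\<lambda>k. if k = m then - complex_of_real t * W m j else if k = j then 1 else 0)) \<ge> 0" for t
    using assms(1) unfolding PSDf_def nn_def by blast
  hence ineq: "- 2 * t * ((Re (W m j))\<^sup>2 + (Im (W m j))\<^sup>2) + Re (W j j) \<ge> 0" for t
    unfolding qf_two[OF assms(2,3) False] herm assms(4)
    using djj by (simp add: algebra_simps power2_eq_square)
  have pos: "(Re (W m j))\<^sup>2 + (Im (W m j))\<^sup>2 > 0" if "W m j \<noteq> 0"
    using that by (simp add: complex_eq_iff sum_power2_gt_zero_iff)
  show ?thesis
    using pos ineq[of "(Re (W j j) + 1) / (2 * ((Re (W m j))\<^sup>2 + (Im (W m j))\<^sup>2))"]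
    by (cases "W m j = 0") (auto simp: field_simps)
qed



definition bf :: "nat \<Rightarrow> (nat \<Rightarrow> nat \<Rightarrow> complex) \<Rightarrow> (nat \<Rightarrow> complex) \<Rightarrow> (nat \<Rightarrow> complex) \<Rightarrow> complex" where
  "bf d W u v = (\<Sum>i<d. \<Sum>j<d. cnj (u i) * W i j * v j)"

lemma qf_add: "qf d W (\<lambda>k. f k + h k) = qf d W f + bf d W f h + bf d W h f + qf d W h"
  unfolding qf_def bf_def by (simp add: algebra_simps sum.distrib)

lemma bf_delta_right: "m < d \<Longrightarrow> bf d W f (\<lambda>k. if k = m then t else 0) = t * (\<Sum>i<d. cnj (f i) * W i m)"
  unfolding bf_def sum_distrib_left
  by (intro sum.cong refl, subst sum_one_support[of m]) (auto simp: algebra_simps)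

lemma bf_delta_left: "m < d \<Longrightarrow> bf d W (\<lambda>k. if k = m then t else 0) f = cnj t * (\<Sum>j<d. W m j * f j)"
  unfolding bf_def sum_distrib_left
  by (subst sum_one_support[of m]) (auto simp: algebra_simps)

lemma PSDf_schur_step:
  assumes P: "PSDf d W" and m: "m < d" and r: "Re (W m m) > 0"
  defines "g \<equiv> \<lambda>j. W j m / complex_of_real (sqrt (Re (W m m)))"
  shows "PSDf d (\<lambda>i j. W i j - g i * cnj (g j))"
  unfolding PSDf_def
proof
  fix f
  define R where "R = Re (W m m)"
  have WR: "W m m = complex_of_real R" using PSDf_diag[OF P m] unfolding R_def by (simp add: complex_eq_iff)
  have R: "R > 0" using r R_def by auto
  define s where "s = (\<Sum>j<d. W m j * f j)"
  have cs: "(\<Sum>i<d. cnj (f i) * W i m) = cnj s"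
    unfolding s_def by (simp add: PSDf_herm[OF P m] mult.commute)
  define t where "t = - s / complex_of_real R"
  have "nn (qf d W (\<lambda>k. f k + (if k = m then t else 0)))" using P unfolding PSDf_def by blast
  also have "qf d W (\<lambda>k. f k + (if k = m then t else 0)) = qf d W f - cnj s * s / complex_of_real R"
    unfolding qf_add bf_delta_right[OF m] bf_delta_left[OF m] qf_one[OF m] cs s_def[symmetric] WR t_def
    using R by (simp add: field_simps)
  finally have h: "nn (qf d W f - cnj s * s / complex_of_real R)" .
  have gsum: "(\<Sum>j<d. cnj (g j) * f j) = s / complex_of_real (sqrt R)"
    unfolding g_def s_def R_def[symmetric] using PSDf_herm[OF P m]
    by (simp add: sum_divide_distrib)
  have gsum2: "(\<Sum>i<d. cnj (f i) * g i) = cnj s / complex_of_real (sqrt R)"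
    using arg_cong[OF gsum, of cnj] by (simp add: mult.commute)
  have "qf d (\<lambda>i j. W i j - g i * cnj (g j)) f = qf d W f - (\<Sum>i<d. cnj (f i) * g i) * (\<Sum>j<d. cnj (g j) * f j)"
    unfolding qf_def by (simp add: algebra_simps sum_subtractf sum_distrib_left sum_distrib_right)
  also have "\<dots> = qf d W f - cnj s * s / complex_of_real R"
    unfolding gsum gsum2 using R
    by (simp add: field_simps) (metis of_real_mult real_sqrt_mult_self less_imp_le real_sqrt_pow2 power2_eq_square)
  finally show "nn (qf d (\<lambda>i j. W i j - g i * cnj (g j)) f)" using h by simp
qed



lemma PSDf_decomp_aux:
  assumes "m \<le> d"
  shows "\<forall>W. PSDf d W \<and> (\<forall>i j. i < d \<longrightarrow> j < d \<longrightarrow> (i < m \<or> j < m) \<longrightarrow> W i j = 0) \<longrightarrow>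
    (\<exists>F. \<forall>i<d. \<forall>j<d. W i j = (\<Sum>k\<in>{m..<d}. F k i * cnj (F k j)))"
  using assms
proof (induction m rule: inc_induct)
  case base
  show ?case by auto
next
  case (step m)
  show ?case
  proof (intro allI impI, elim conjE)
    fix W assume P: "PSDf d W" and Z: "\<forall>i j. i < d \<longrightarrow> j < d \<longrightarrow> (i < m \<or> j < m) \<longrightarrow> W i j = 0"
    have md: "m < d" using step by auto
    have split: "(\<Sum>k\<in>{m..<d}. F k i * cnj (F k j)) = F m i * cnj (F m j) + (\<Sum>k\<in>{Suc m..<d}. F k i * cnj (F k j))" for F i j
      using md by (simp add: sum.atLeast_Suc_lessThan)
    have cong: "(\<Sum>k\<in>{Suc m..<d}. (F(m := h)) k i * cnj ((F(m := h)) k j)) = (\<Sum>k\<in>{Suc m..<d}. F k i * cnj (F k j))" for F h i j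
      by (intro sum.cong refl) auto
    show "\<exists>F. \<forall>i<d. \<forall>j<d. W i j = (\<Sum>k\<in>{m..<d}. F k i * cnj (F k j))"
    proof (cases "Re (W m m) > 0")
      case False
      have "Re (W m m) \<ge> 0" "Im (W m m) = 0" using PSDf_diag[OF P md] by auto
      hence W0: "W m m = 0" using False by (simp add: complex_eq_iff)
      have row: "W m j = 0" if "j < d" for j using PSDf_zero_row[OF P md that W0] .
      have col: "W j m = 0" if "j < d" for j using PSDf_herm[OF P md that] row[OF that] by simp
      have "\<forall>i j. i < d \<longrightarrow> j < d \<longrightarrow> (i < Suc m \<or> j < Suc m) \<longrightarrow> W i j = 0"
        using Z row col by (auto simp: less_Suc_eq)
      then obtain F where F: "\<forall>i<d. \<forall>j<d. W i j = (\<Sum>k\<in>{Suc m..<d}. F k i * cnj (F k j))"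
        using step.IH P by blast
      show ?thesis
        by (rule exI[of _ "F(m := (\<lambda>_. 0))"]) (unfold split cong, simp add: F)
    next
      case True
      define g where "g = (\<lambda>j. W j m / complex_of_real (sqrt (Re (W m m))))"
      define W' where "W' = (\<lambda>i j. W i j - g i * cnj (g j))"
      have P': "PSDf d W'" unfolding W'_def g_def by (rule PSDf_schur_step[OF P md True])
      have WR: "W m m = complex_of_real (Re (W m m))" using PSDf_diag[OF P md] by (simp add: complex_eq_iff)
      have sq: "complex_of_real (sqrt (Re (W m m))) * complex_of_real (sqrt (Re (W m m))) = W m m"
      proof -
        have "sqrt (Re (W m m)) * sqrt (Re (W m m)) = Re (W m m)" using True by simp
        hence "complex_of_real (sqrt (Re (W m m))) * complex_of_real (sqrt (Re (W m m))) = complex_of_real (Re (W m m))"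
          by (metis of_real_mult)
        thus ?thesis using WR by simp
      qed
      have nz: "complex_of_real (sqrt (Re (W m m))) \<noteq> 0" using True by simp
      have wnz: "W m m \<noteq> 0" using True by auto
      have row: "W' m j = 0" if "j < d" for j
      proof -
        have "g m * cnj (g j) = W m m * W m j / (complex_of_real (sqrt (Re (W m m))) * complex_of_real (sqrt (Re (W m m))))"
          unfolding g_def using PSDf_herm[OF P that md] by simp
        also have "\<dots> = W m j" using sq nz wnz by (simp add: field_simps)
        finally show ?thesis unfolding W'_def by simp
      qed
      have col: "W' j m = 0" if "j < d" for j
      proof -
        have "g j * cnj (g m) = W j m * W m m / (complex_of_real (sqrt (Re (W m m))) * complex_of_real (sqrt (Re (W m m))))"
          unfolding g_def using PSDf_diag[OF P md] by (simp add: complex_eq_iff)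
        also have "\<dots> = W j m" using sq nz wnz by (simp add: field_simps)
        finally show ?thesis unfolding W'_def by simp
      qed
      have gz: "g i = 0" if "i < m" for i using Z that md unfolding g_def by auto
      have "\<forall>i j. i < d \<longrightarrow> j < d \<longrightarrow> (i < Suc m \<or> j < Suc m) \<longrightarrow> W' i j = 0"
        using Z row col gz by (auto simp: less_Suc_eq W'_def)
      then obtain F where F: "\<forall>i<d. \<forall>j<d. W' i j = (\<Sum>k\<in>{Suc m..<d}. F k i * cnj (F k j))"
        using step.IH P' by blast
      show ?thesis
      proof (rule exI[of _ "F(m := g)"], intro allI impI)
        fix i j assume ij: "i < d" "j < d"
        have "W i j - g i * cnj (g j) = (\<Sum>k\<in>{Suc m..<d}. F k i * cnj (F k j))"
          using F ij unfolding W'_def by simp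
        hence e: "W i j = g i * cnj (g j) + (\<Sum>k\<in>{Suc m..<d}. F k i * cnj (F k j))"
          by (metis add.commute diff_add_cancel)
        show "W i j = (\<Sum>k\<in>{m..<d}. (F(m := g)) k i * cnj ((F(m := g)) k j))"
          unfolding split cong fun_upd_same by (rule e)
      qed
    qed
  qed
qed

lemma PSDf_decomp:
  assumes "PSDf d W"
  shows "\<exists>F. \<forall>i<d. \<forall>j<d. W i j = (\<Sum>k<d. F k i * cnj (F k j))"
  using PSDf_decomp_aux[of 0 d] assms by (simp add: atLeast0LessThan)



lemma msum_carrier[simp]: "msum r c f L \<in> carrier_mat r c" unfolding msum_def by simp
lemma msum_dims[simp]: "dim_row (msum r c f L) = r" "dim_col (msum r c f L) = c" unfolding msum_def by simp_all
lemma msum_index[simp]: "i < r \<Longrightarrow> j < c \<Longrightarrow> msum r c f L $$ (i,j) = (\<Sum>l\<in>L. f l $$ (i,j))"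
  unfolding msum_def by simp

lemma lin_map_zero:
  assumes "lin_map dX dY \<Gamma>" shows "\<Gamma> (0\<^sub>m dX dX) = 0\<^sub>m dY dY"
proof -
  have c: "\<Gamma> (0\<^sub>m dX dX) \<in> carrier_mat dY dY" using assms unfolding lin_map_def by auto
  have z: "0 \<cdot>\<^sub>m 0\<^sub>m dX dX = (0\<^sub>m dX dX :: complex mat)" by (intro eq_matI) auto
  have zc: "0\<^sub>m dX dX \<in> carrier_mat dX dX" by simp
  have "\<Gamma> (0 \<cdot>\<^sub>m 0\<^sub>m dX dX) = 0 \<cdot>\<^sub>m \<Gamma> (0\<^sub>m dX dX)" using assms zc unfolding lin_map_def by blast
  hence "\<Gamma> (0\<^sub>m dX dX) = 0 \<cdot>\<^sub>m \<Gamma> (0\<^sub>m dX dX)" unfolding z .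
  also have "\<dots> = 0\<^sub>m dY dY" using c by (intro eq_matI) auto
  finally show ?thesis .
qed

lemma lin_map_msum:
  assumes lin: "lin_map dX dY \<Gamma>" and fin: "finite L" and car: "\<And>l. l \<in> L \<Longrightarrow> f l \<in> carrier_mat dX dX"
  shows "\<Gamma> (msum dX dX f L) = msum dY dY (\<lambda>l. \<Gamma> (f l)) L"
  using fin car
proof (induction L rule: finite_induct)
  case empty
  have "msum dX dX f {} = 0\<^sub>m dX dX" by (intro eq_matI) auto
  moreover have "msum dY dY (\<lambda>l. \<Gamma> (f l)) {} = 0\<^sub>m dY dY" by (intro eq_matI) auto
  ultimately show ?case using lin_map_zero[OF lin] by simp
next
  case (insert x F)
  have e1: "msum dX dX f (insert x F) = f x + msum dX dX f F"
    using insert(1,2,4) by (intro eq_matI) auto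
  have cx: "\<Gamma> (f x) \<in> carrier_mat dY dY" using lin insert(4) unfolding lin_map_def by auto
  have e2: "msum dY dY (\<lambda>l. \<Gamma> (f l)) (insert x F) = \<Gamma> (f x) + msum dY dY (\<lambda>l. \<Gamma> (f l)) F"
    using insert(1,2) cx by (intro eq_matI) auto
  have "\<Gamma> (f x + msum dX dX f F) = \<Gamma> (f x) + \<Gamma> (msum dX dX f F)"
    using lin insert(4) unfolding lin_map_def by auto
  thus ?case using e1 e2 insert by simp
qed

definition Emat :: "nat \<Rightarrow> nat \<Rightarrow> nat \<Rightarrow> complex mat" where
  "Emat d i j = mat d d (\<lambda>(a,b). if a = i \<and> b = j then 1 else 0)"

lemma Emat_carrier[simp]: "Emat d i j \<in> carrier_mat d d" unfolding Emat_def by simp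

lemma mat_expand:
  assumes "X \<in> carrier_mat d d"
  shows "X = msum d d (\<lambda>p. X $$ p \<cdot>\<^sub>m Emat d (fst p) (snd p)) ({..<d} \<times> {..<d})"
proof (rule eq_matI)
  fix a b assume ab: "a < dim_row (msum d d (\<lambda>p. X $$ p \<cdot>\<^sub>m Emat d (fst p) (snd p)) ({..<d} \<times> {..<d}))"
    "b < dim_col (msum d d (\<lambda>p. X $$ p \<cdot>\<^sub>m Emat d (fst p) (snd p)) ({..<d} \<times> {..<d}))"
  hence ab: "a < d" "b < d" by auto
  have "msum d d (\<lambda>p. X $$ p \<cdot>\<^sub>m Emat d (fst p) (snd p)) ({..<d} \<times> {..<d}) $$ (a,b)
      = (\<Sum>p\<in>{..<d} \<times> {..<d}. (if p = (a,b) then X $$ (a,b) else 0))"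
    unfolding msum_index[OF ab] using ab by (intro sum.cong refl) (auto simp: Emat_def)
  also have "\<dots> = X $$ (a,b)" using ab by simp
  finally show "X $$ (a,b) = msum d d (\<lambda>p. X $$ p \<cdot>\<^sub>m Emat d (fst p) (snd p)) ({..<d} \<times> {..<d}) $$ (a,b)" by simp
qed (use assms in auto)

lemma divmod_idx: "a < (d::nat) \<Longrightarrow> (i * d + a) div d = i" "a < d \<Longrightarrow> (i * d + a) mod d = a"
  by auto

lemma idx_lt: "i < n \<Longrightarrow> a < (d::nat) \<Longrightarrow> i * d + a < n * d"
proof -
  assume "i < n" "a < d"
  hence "i * d + a < i * d + d" by simp
  also have "\<dots> = Suc i * d" by simp
  also have "\<dots> \<le> n * d" using \<open>i < n\<close> by (intro mult_le_mono1) simp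
  finally show ?thesis .
qed

lemma blk_max_ent:
  assumes "i < d" "j < d"
  shows "blk d (max_ent d) i j = (1 / of_nat d) \<cdot>\<^sub>m Emat d i j"
  using assms by (intro eq_matI) (auto simp: blk_def max_ent_def Emat_def idx_lt)

lemma choi_index:
  assumes "c < dC" "c' < dC" "y < dY" "y' < dY"
  shows "choi dC dY \<Gamma> $$ (c * dY + y, c' * dY + y') = \<Gamma> (blk dC (max_ent dC) c c') $$ (y, y')"
  using assms unfolding choi_def id_tensor_def by (simp add: idx_lt)

lemma recon:
  assumes lin: "lin_map dC dY \<Gamma>" and X: "X \<in> carrier_mat dC dC"
  shows "\<Gamma> X = mat dY dY (\<lambda>(y,y'). \<Sum>c<dC. \<Sum>c'<dC. X $$ (c,c') * of_nat dC * choi dC dY \<Gamma> $$ (c * dY + y, c' * dY + y'))"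
proof -
  have car: "\<And>p. p \<in> {..<dC} \<times> {..<dC} \<Longrightarrow> (\<lambda>p. X $$ p \<cdot>\<^sub>m Emat dC (fst p) (snd p)) p \<in> carrier_mat dC dC"
    by auto
  have "\<Gamma> X = msum dY dY (\<lambda>p. \<Gamma> ((\<lambda>p. X $$ p \<cdot>\<^sub>m Emat dC (fst p) (snd p)) p)) ({..<dC} \<times> {..<dC})"
    by (subst mat_expand[OF X]) (rule lin_map_msum[OF lin _ car], auto)
  also have "\<dots> = mat dY dY (\<lambda>(y,y'). \<Sum>c<dC. \<Sum>c'<dC. X $$ (c,c') * of_nat dC * choi dC dY \<Gamma> $$ (c * dY + y, c' * dY + y'))"
  proof (rule eq_matI)
    fix y y' assume yy: "y < dim_row (mat dY dY (\<lambda>(y,y'). \<Sum>c<dC. \<Sum>c'<dC. X $$ (c,c') * of_nat dC * choi dC dY \<Gamma> $$ (c * dY + y, c' * dY + y')))"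
      "y' < dim_col (mat dY dY (\<lambda>(y,y'). \<Sum>c<dC. \<Sum>c'<dC. X $$ (c,c') * of_nat dC * choi dC dY \<Gamma> $$ (c * dY + y, c' * dY + y')))"
    hence yy: "y < dY" "y' < dY" by auto
    have trm: "\<Gamma> (X $$ (c,c') \<cdot>\<^sub>m Emat dC c c') $$ (y,y') = X $$ (c,c') * of_nat dC * choi dC dY \<Gamma> $$ (c * dY + y, c' * dY + y')"
      if cc: "c < dC" "c' < dC" for c c'
    proof -
      have dC: "dC > 0" using cc by auto
      have Ec: "\<Gamma> (Emat dC c c') \<in> carrier_mat dY dY" using lin unfolding lin_map_def by auto
      have "blk dC (max_ent dC) c c' = (1 / of_nat dC) \<cdot>\<^sub>m Emat dC c c'" by (rule blk_max_ent[OF cc])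
      hence "choi dC dY \<Gamma> $$ (c * dY + y, c' * dY + y') = ((1 / of_nat dC) \<cdot>\<^sub>m \<Gamma> (Emat dC c c')) $$ (y, y')"
        using choi_index[OF cc yy] lin unfolding lin_map_def by auto
      hence "choi dC dY \<Gamma> $$ (c * dY + y, c' * dY + y') = (1 / of_nat dC) * \<Gamma> (Emat dC c c') $$ (y, y')"
        using Ec yy by simp
      moreover have "\<Gamma> (X $$ (c,c') \<cdot>\<^sub>m Emat dC c c') = X $$ (c,c') \<cdot>\<^sub>m \<Gamma> (Emat dC c c')"
        using lin unfolding lin_map_def by auto
      hence "\<Gamma> (X $$ (c,c') \<cdot>\<^sub>m Emat dC c c') $$ (y,y') = X $$ (c,c') * \<Gamma> (Emat dC c c') $$ (y,y')"
        using Ec yy by simp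
      ultimately show ?thesis using dC by simp
    qed
    show "msum dY dY (\<lambda>p. \<Gamma> ((\<lambda>p. X $$ p \<cdot>\<^sub>m Emat dC (fst p) (snd p)) p)) ({..<dC} \<times> {..<dC}) $$ (y, y') =
       mat dY dY (\<lambda>(y,y'). \<Sum>c<dC. \<Sum>c'<dC. X $$ (c,c') * of_nat dC * choi dC dY \<Gamma> $$ (c * dY + y, c' * dY + y')) $$ (y, y')"
    proof -
      have "msum dY dY (\<lambda>p. \<Gamma> ((\<lambda>p. X $$ p \<cdot>\<^sub>m Emat dC (fst p) (snd p)) p)) ({..<dC} \<times> {..<dC}) $$ (y, y')
          = (\<Sum>l\<in>{..<dC} \<times> {..<dC}. \<Gamma> (X $$ l \<cdot>\<^sub>m Emat dC (fst l) (snd l)) $$ (y, y'))"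
        using yy by simp
      also have "\<dots> = (\<Sum>c<dC. \<Sum>c'<dC. \<Gamma> (X $$ (c,c') \<cdot>\<^sub>m Emat dC c c') $$ (y, y'))"
        by (simp add: sum.cartesian_product case_prod_unfold)
      also have "\<dots> = (\<Sum>c<dC. \<Sum>c'<dC. X $$ (c,c') * of_nat dC * choi dC dY \<Gamma> $$ (c * dY + y, c' * dY + y'))"
        by (intro sum.cong refl) (simp add: trm)
      finally show ?thesis using yy by simp
    qed
  qed auto
  finally show ?thesis .
qed



lemma psd_PSDf: "psd d M \<Longrightarrow> PSDf d (\<lambda>i j. M $$ (i,j))"
  unfolding psd_iff PSDf_def by auto

lemma max_ent_psd: "psd (d * d) (max_ent d)"
proof -
  define a where "a = (\<lambda>r::nat. if r div d = r mod d then (1::complex) else 0)"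
  have ent: "max_ent d $$ (r,s) = a r * a s / of_nat d" if "r < d * d" "s < d * d" for r s
    using that unfolding max_ent_def a_def by auto
  have "nn (qf (d*d) (\<lambda>i j. max_ent d $$ (i,j)) f)" for f
  proof -
    define S where "S = (\<Sum>s<d*d. a s * f s)"
    have ca: "cnj (a r) = a r" for r unfolding a_def by auto
    have "qf (d*d) (\<lambda>i j. max_ent d $$ (i,j)) f = (\<Sum>r<d*d. \<Sum>s<d*d. cnj (f r) * (a r * a s / of_nat d) * f s)"
      unfolding qf_def by (intro sum.cong refl) (simp add: ent)
    also have "\<dots> = complex_of_real (1 / real d) * (cnj S * S)"
      unfolding S_def by (simp add: sum_distrib_left sum_distrib_right algebra_simps ca)
    finally have eq: "qf (d*d) (\<lambda>i j. max_ent d $$ (i,j)) f = complex_of_real (1 / real d) * (cnj S * S)" .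
    show ?thesis unfolding eq by (rule nn_real_mult) auto
  qed
  thus ?thesis unfolding psd_iff max_ent_def by auto
qed

lemma cp_lin: "completely_positive dX dY \<Gamma> \<Longrightarrow> lin_map dX dY \<Gamma>"
  unfolding completely_positive_def by auto

lemma choi_carrier[simp]: "choi dC dY \<Gamma> \<in> carrier_mat (dC * dY) (dC * dY)"
  unfolding choi_def id_tensor_def by simp

lemma choi_dims[simp]: "dim_row (choi dC dY \<Gamma>) = dC * dY" "dim_col (choi dC dY \<Gamma>) = dC * dY"
  unfolding choi_def id_tensor_def by simp_all

lemma choi_psd:
  assumes "completely_positive dC dY \<Gamma>" "dC > 0"
  shows "psd (dC * dY) (choi dC dY \<Gamma>)"
  using assms max_ent_psd[of dC] unfolding completely_positive_def choi_def by blast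

lemma mtrace_blk_max_ent: "c < d \<Longrightarrow> mtrace (blk d (max_ent d) c c) = 1 / of_nat d"
proof -
  assume c: "c < d"
  have "mtrace (blk d (max_ent d) c c) = (\<Sum>a<d. if a = c then 1 / of_nat d else 0)"
    unfolding blk_max_ent[OF c c] mtrace_def by (intro sum.cong refl) (auto simp: Emat_def)
  thus ?thesis using c by simp
qed

lemma blk_carrier[simp]: "blk d X p q \<in> carrier_mat d d" unfolding blk_def by simp

lemma mtrace_choi:
  assumes "lin_map dC dY \<Gamma>"
  shows "mtrace (choi dC dY \<Gamma>) = (\<Sum>c<dC. mtrace (\<Gamma> (blk dC (max_ent dC) c c)))"
proof -
  have car: "\<Gamma> (blk dC (max_ent dC) c c) \<in> carrier_mat dY dY" for c
    using assms unfolding lin_map_def by auto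
  have "mtrace (choi dC dY \<Gamma>) = (\<Sum>r<dC*dY. choi dC dY \<Gamma> $$ (r,r))"
    unfolding mtrace_def by simp
  also have "\<dots> = (\<Sum>c<dC. \<Sum>y<dY. choi dC dY \<Gamma> $$ (c*dY+y, c*dY+y))" by (rule sum_prod_split)
  also have "\<dots> = (\<Sum>c<dC. \<Sum>y<dY. \<Gamma> (blk dC (max_ent dC) c c) $$ (y,y))"
    by (intro sum.cong refl) (simp add: choi_index)
  also have "\<dots> = (\<Sum>c<dC. mtrace (\<Gamma> (blk dC (max_ent dC) c c)))"
    unfolding mtrace_def by (intro sum.cong refl) (simp add: carrier_matD(1)[OF car])
  finally show ?thesis .
qed

lemma mtrace_choi_tp:
  assumes "lin_map dC dY \<Gamma>" "\<forall>X \<in> carrier_mat dC dC. mtrace (\<Gamma> X) = mtrace X"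
  shows "mtrace (choi dC dY \<Gamma>) = (if dC = 0 then 0 else 1)"
proof -
  have "mtrace (choi dC dY \<Gamma>) = (\<Sum>c<dC. 1 / of_nat dC)"
    unfolding mtrace_choi[OF assms(1)] using assms(2) mtrace_blk_max_ent by (intro sum.cong refl) auto
  thus ?thesis by simp
qed

lemma mtrace_msum: "(\<And>l. l \<in> L \<Longrightarrow> f l \<in> carrier_mat d d) \<Longrightarrow> mtrace (msum d d f L) = (\<Sum>l\<in>L. mtrace (f l))"
proof -
  assume car: "\<And>l. l \<in> L \<Longrightarrow> f l \<in> carrier_mat d d"
  have "mtrace (msum d d f L) = (\<Sum>i<d. \<Sum>l\<in>L. f l $$ (i,i))" unfolding mtrace_def by simp
  also have "\<dots> = (\<Sum>l\<in>L. \<Sum>i<d. f l $$ (i,i))" by (rule sum.swap)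
  also have "\<dots> = (\<Sum>l\<in>L. mtrace (f l))" unfolding mtrace_def using car by (intro sum.cong refl) auto
  finally show ?thesis .
qed

lemma psd_diag: assumes "psd d M" "i < d" shows "Im (M $$ (i,i)) = 0" "Re (M $$ (i,i)) \<ge> 0"
  using PSDf_diag[OF psd_PSDf[OF assms(1)] assms(2)] by auto

lemma psd_trace: assumes "psd d M" shows "Im (mtrace M) = 0" "Re (mtrace M) \<ge> 0"
proof -
  have dr: "dim_row M = d" using assms unfolding psd_def by auto
  show "Im (mtrace M) = 0" unfolding mtrace_def dr Im_sum using psd_diag[OF assms] by simp
  show "Re (mtrace M) \<ge> 0" unfolding mtrace_def dr Re_sum by (rule sum_nonneg) (use psd_diag[OF assms] in auto)
qed

lemma psd_trace_zero:
  assumes "psd d M" "mtrace M = 0" shows "M = 0\<^sub>m d d"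
proof -
  have car: "M \<in> carrier_mat d d" using assms unfolding psd_def by auto
  have dr: "dim_row M = d" using car by auto
  have "(\<Sum>i<d. Re (M $$ (i,i))) = 0" using assms(2) unfolding mtrace_def dr by (metis Re_sum zero_complex.sel(1))
  hence "\<forall>i\<in>{..<d}. Re (M $$ (i,i)) = 0"
    by (subst sum_nonneg_eq_0_iff[symmetric]) (use psd_diag[OF assms(1)] in auto)
  hence d0: "M $$ (i,i) = 0" if "i < d" for i using psd_diag[OF assms(1) that] that by (simp add: complex_eq_iff)
  show ?thesis
    by (rule eq_matI) (use car PSDf_zero_row[OF psd_PSDf[OF assms(1)] _ _ d0] in auto)
qed

lemma psd_scale:
  assumes "psd d M" "(c::real) \<ge> 0" shows "psd d (complex_of_real c \<cdot>\<^sub>m M)"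
proof -
  have car: "M \<in> carrier_mat d d" using assms unfolding psd_def by auto
  have "qf d (\<lambda>i j. (complex_of_real c \<cdot>\<^sub>m M) $$ (i,j)) f = complex_of_real c * qf d (\<lambda>i j. M $$ (i,j)) f" for f
    unfolding qf_def using car by (simp add: sum_distrib_left algebra_simps)
  thus ?thesis using assms car unfolding psd_iff by (auto intro: nn_real_mult)
qed

lemma mtrace_scale: "M \<in> carrier_mat d d \<Longrightarrow> mtrace (c \<cdot>\<^sub>m M) = c * mtrace M"
  unfolding mtrace_def by (simp add: sum_distrib_left)



lemma reorder7:
  fixes T :: "'k \<Rightarrow> 'p \<Rightarrow> 'b \<Rightarrow> 'p \<Rightarrow> 'b \<Rightarrow> 'c \<Rightarrow> 'c \<Rightarrow> 'a::comm_monoid_add"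
  shows "(\<Sum>p\<in>P. \<Sum>b\<in>B. \<Sum>q\<in>P. \<Sum>b'\<in>B. \<Sum>c\<in>C. \<Sum>c'\<in>C. \<Sum>k\<in>K. T k p b q b' c c') =
         (\<Sum>k\<in>K. \<Sum>p\<in>P. \<Sum>c\<in>C. \<Sum>q\<in>P. \<Sum>c'\<in>C. \<Sum>b\<in>B. \<Sum>b'\<in>B. T k p b q b' c c')"
  by (simp add: sum.cartesian_product, rule sum.reindex_bij_witness[where i = "\<lambda>(k,p,c,q,c',b,b'). (p,b,q,b',c,c',k)" and j = "\<lambda>(p,b,q,b',c,c',k). (k,p,c,q,c',b,b')"]) auto

definition cinv :: "nat \<Rightarrow> nat \<Rightarrow> complex mat \<Rightarrow> complex mat \<Rightarrow> complex mat" where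
  "cinv dC dB W X = mat dB dB (\<lambda>(b,b'). \<Sum>c<dC. \<Sum>c'<dC. X $$ (c,c') * W $$ (c*dB+b, c'*dB+b'))"

lemma cinv_carrier[simp]: "cinv dC dB W X \<in> carrier_mat dB dB" unfolding cinv_def by simp

lemma cinv_lin: "lin_map dC dB (cinv dC dB W)"
  unfolding lin_map_def
proof (intro conjI ballI allI)
  fix X Y :: "complex mat" assume X: "X \<in> carrier_mat dC dC" and Y: "Y \<in> carrier_mat dC dC"
  show "cinv dC dB W (X + Y) = cinv dC dB W X + cinv dC dB W Y"
    by (rule eq_matI) (use X Y in \<open>auto simp: cinv_def algebra_simps sum.distrib\<close>)
next
  fix X :: "complex mat" and c assume X: "X \<in> carrier_mat dC dC"
  show "cinv dC dB W (c \<cdot>\<^sub>m X) = c \<cdot>\<^sub>m cinv dC dB W X"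
    by (rule eq_matI) (use X in \<open>auto simp: cinv_def algebra_simps sum_distrib_left\<close>)
qed simp

lemma cinv_cp:
  assumes W: "psd (dC * dB) W"
  shows "completely_positive dC dB (cinv dC dB W)"
  unfolding completely_positive_def
proof (intro conjI cinv_lin allI impI)
  fix n X assume n: "n > 0" and X: "psd (n * dC) X"
  obtain F where F: "\<forall>i<dC*dB. \<forall>j<dC*dB. W $$ (i,j) = (\<Sum>k<dC*dB. F k i * cnj (F k j))"
    using PSDf_decomp[OF psd_PSDf[OF W]] by blast
  let ?M = "id_tensor n dC dB (cinv dC dB W) X"
  have Mcar: "?M \<in> carrier_mat (n*dB) (n*dB)" unfolding id_tensor_def by simp
  have ent: "?M $$ (p*dB+b, q*dB+b') = (\<Sum>c<dC. \<Sum>c'<dC. X $$ (p*dC+c, q*dC+c') *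
        (\<Sum>k<dC*dB. F k (c*dB+b) * cnj (F k (c'*dB+b'))))"
    if "p < n" "q < n" "b < dB" "b' < dB" for p q b b'
    using that by (auto simp: id_tensor_def idx_lt cinv_def blk_def F intro!: sum.cong)
  define u where "u = (\<lambda>f k t. \<Sum>b<dB. f ((t div dC)*dB + b) * cnj (F k ((t mod dC)*dB+b)))"
  have "nn (qf (n*dB) (\<lambda>i j. ?M $$ (i,j)) f)" for f
  proof -
    define T where "T = (\<lambda>k p b q b' c c'. cnj (f (p*dB+b)) * X $$ (p*dC+c, q*dC+c') *
          F k (c*dB+b) * cnj (F k (c'*dB+b')) * f (q*dB+b'))"
    have "qf (n*dB) (\<lambda>i j. ?M $$ (i,j)) f =
      (\<Sum>p<n. \<Sum>b<dB. \<Sum>q<n. \<Sum>b'<dB. cnj (f (p*dB+b)) * ?M $$ (p*dB+b, q*dB+b') * f (q*dB+b'))"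
      unfolding qf_def by (simp add: sum_prod_split)
    also have "\<dots> = (\<Sum>p<n. \<Sum>b<dB. \<Sum>q<n. \<Sum>b'<dB. cnj (f (p*dB+b)) * (\<Sum>c<dC. \<Sum>c'<dC. X $$ (p*dC+c, q*dC+c') *
        (\<Sum>k<dC*dB. F k (c*dB+b) * cnj (F k (c'*dB+b')))) * f (q*dB+b'))"
      by (intro sum.cong refl) (simp add: ent)
    also have "\<dots> = (\<Sum>p<n. \<Sum>b<dB. \<Sum>q<n. \<Sum>b'<dB. \<Sum>c<dC. \<Sum>c'<dC. \<Sum>k<dC*dB. T k p b q b' c c')"
      unfolding T_def by (simp add: sum_distrib_left sum_distrib_right algebra_simps)
    also have "\<dots> = (\<Sum>k<dC*dB. \<Sum>p<n. \<Sum>c<dC. \<Sum>q<n. \<Sum>c'<dC. \<Sum>b<dB. \<Sum>b'<dB. T k p b q b' c c')"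
      by (rule reorder7)
    also have "\<dots> = (\<Sum>k<dC*dB. qf (n*dC) (\<lambda>i j. X $$ (i,j)) (u f k))"
    proof (rule sum.cong[OF refl])
      fix k
      have "qf (n*dC) (\<lambda>i j. X $$ (i,j)) (u f k) =
        (\<Sum>p<n. \<Sum>c<dC. \<Sum>q<n. \<Sum>c'<dC. cnj (u f k (p*dC+c)) * X $$ (p*dC+c, q*dC+c') * u f k (q*dC+c'))"
        unfolding qf_def by (simp add: sum_prod_split)
      also have "\<dots> = (\<Sum>p<n. \<Sum>c<dC. \<Sum>q<n. \<Sum>c'<dC. \<Sum>b<dB. \<Sum>b'<dB. T k p b q b' c c')"
        by (intro sum.cong refl) (simp add: u_def T_def sum_distrib_left sum_distrib_right algebra_simps)
      finally show "(\<Sum>p<n. \<Sum>c<dC. \<Sum>q<n. \<Sum>c'<dC. \<Sum>b<dB. \<Sum>b'<dB. T k p b q b' c c') =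
          qf (n*dC) (\<lambda>i j. X $$ (i,j)) (u f k)" by simp
    qed
    finally have eq: "qf (n*dB) (\<lambda>i j. ?M $$ (i,j)) f = (\<Sum>k<dC*dB. qf (n*dC) (\<lambda>i j. X $$ (i,j)) (u f k))" .
    show ?thesis unfolding eq using X unfolding psd_iff by auto
  qed
  thus "psd (n * dB) ?M" unfolding psd_iff using Mcar by auto
qed



lemma density_carrier: "density d M \<Longrightarrow> M \<in> carrier_mat d d"
  unfolding density_def psd_def by auto

lemma kron_index:
  assumes "M \<in> carrier_mat dA dA" "N \<in> carrier_mat dB dB" "y < dA * dB" "y' < dA * dB"
  shows "kron M N $$ (y, y') = M $$ (y div dB, y' div dB) * N $$ (y mod dB, y' mod dB)"
  using assms unfolding kron_def by auto

lemma kron_carrier: "M \<in> carrier_mat dA dA \<Longrightarrow> N \<in> carrier_mat dB dB \<Longrightarrow> kron M N \<in> carrier_mat (dA*dB) (dA*dB)"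
  unfolding kron_def by auto

lemma idx3:
  fixes dA dB :: nat
  assumes "y < dA * dB"
  shows "(c * (dA * dB) + y) div (dA * dB) = c" "(c * (dA * dB) + y) mod (dA * dB) = y"
        "(c * (dA * dB) + y) mod dB = y mod dB"
proof -
  have pos: "dA * dB > 0" using assms by (metis gr_zeroI less_nat_zero_code)
  show "(c * (dA * dB) + y) div (dA * dB) = c" "(c * (dA * dB) + y) mod (dA * dB) = y"
    using assms pos by simp_all
  have "c * (dA * dB) + y = y + (c * dA) * dB" by (simp add: algebra_simps)
  thus "(c * (dA * dB) + y) mod dB = y mod dB" by (simp only: mod_mult_self1)
qed

lemma prod_index:
  assumes "c < dC" "c' < dC" "y < dA * dB" "y' < dA * dB"
  shows "prod_A_BC dA dB dC \<tau> \<omega> $$ (c * (dA*dB) + y, c' * (dA*dB) + y') =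
     \<tau> $$ (y div dB, y' div dB) * \<omega> $$ (c * dB + y mod dB, c' * dB + y' mod dB)"
  using assms idx3[OF assms(3), of c] idx3[OF assms(4), of c'] unfolding prod_A_BC_def
  by (simp add: idx_lt Let_def)

lemma lin_map_cong:
  assumes "\<And>X. X \<in> carrier_mat dX dX \<Longrightarrow> F X = G X" "lin_map dX dY F"
  shows "lin_map dX dY G"
  using assms unfolding lin_map_def by auto

lemma id_tensor_cong:
  assumes "\<And>X. X \<in> carrier_mat dX dX \<Longrightarrow> F X = G X"
  shows "id_tensor n dX dY F M = id_tensor n dX dY G M"
proof -
  have e: "F (blk dX M p q) = G (blk dX M p q)" for p q using assms[OF blk_carrier] .
  show ?thesis unfolding id_tensor_def e ..
qed

lemma channel_cong:
  assumes eq: "\<And>X. X \<in> carrier_mat dX dX \<Longrightarrow> F X = G X" and ch: "channel dX dY F"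
  shows "channel dX dY G"
proof -
  have linF: "lin_map dX dY F" and cpF: "\<And>n X. n > 0 \<Longrightarrow> psd (n * dX) X \<Longrightarrow> psd (n * dY) (id_tensor n dX dY F X)"
    and tpF: "\<And>X. X \<in> carrier_mat dX dX \<Longrightarrow> mtrace (F X) = mtrace X"
    using ch unfolding channel_def completely_positive_def by auto
  have linG: "lin_map dX dY G" by (rule lin_map_cong[OF eq linF])
  have cpG: "psd (n * dY) (id_tensor n dX dY G X)" if "n > 0" "psd (n * dX) X" for n X
    using cpF[OF that] id_tensor_cong[OF eq, where n=n and dY=dY and M=X] by simp
  have tpG: "mtrace (G X) = mtrace X" if "X \<in> carrier_mat dX dX" for X
    using tpF[OF that] eq[OF that] by simp
  show ?thesis unfolding channel_def completely_positive_def using linG cpG tpG by blast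
qed



lemma idx_decomp:
  assumes "r < n * (Y::nat)"
  obtains c y where "c < n" "y < Y" "r = c * Y + y"
proof -
  have Y: "Y > 0" using assms by (metis gr_zeroI mult_0_right not_less_zero)
  have "r div Y < n" using assms by (simp add: less_mult_imp_div_less)
  moreover have "r mod Y < Y" using Y by simp
  moreover have "r = (r div Y) * Y + r mod Y" by simp
  ultimately show ?thesis using that by blast
qed

lemma prod_dims[simp]: "dim_row (prod_A_BC dA dB dC \<tau> \<omega>) = dC * (dA * dB)" "dim_col (prod_A_BC dA dB dC \<tau> \<omega>) = dC * (dA * dB)"
  unfolding prod_A_BC_def by simp_all

lemma forward:
  fixes dA dB dC :: nat and \<Lambda>AB \<Lambda>B :: "complex mat \<Rightarrow> complex mat"
  assumes dA: "dA > 0" and dB: "dB > 0" and dC: "dC > 0"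
    and ext: "channel_extension dA dB dC \<Lambda>AB \<Lambda>B"
    and inc: "incoherent_extension dA dB dC \<Lambda>AB"
  shows "separable_A_BC dA dB dC (choi dC (dA * dB) \<Lambda>AB)"
proof -
  obtain L :: "nat set" and \<Lambda>s \<sigma> where inst: "instrument dC dB L \<Lambda>s"
    and dens: "\<forall>l\<in>L. density dA (\<sigma> l)"
    and eq: "\<forall>X \<in> carrier_mat dC dC. \<Lambda>AB X = msum (dA * dB) (dA * dB) (\<lambda>l. kron (\<sigma> l) (\<Lambda>s l X)) L"
    using inc unfolding incoherent_extension_def by blast
  have finL: "finite L" and cp: "\<And>l. l \<in> L \<Longrightarrow> completely_positive dC dB (\<Lambda>s l)"
    and chsum: "channel dC dB (\<lambda>X. msum dB dB (\<lambda>l. \<Lambda>s l X) L)"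
    using inst unfolding instrument_def by auto
  have lin: "\<And>l. l \<in> L \<Longrightarrow> lin_map dC dB (\<Lambda>s l)" using cp cp_lin by blast
  have Lcar: "\<Lambda>s l X \<in> carrier_mat dB dB" if "l \<in> L" "X \<in> carrier_mat dC dC" for l X
    using lin[OF that(1)] that(2) unfolding lin_map_def by auto
  have scar: "\<sigma> l \<in> carrier_mat dA dA" if "l \<in> L" for l using dens that density_carrier by blast
  define J where "J = (\<lambda>l. choi dC dB (\<Lambda>s l))"
  define t where "t = (\<lambda>l. mtrace (J l))"
  have Jpsd: "psd (dC * dB) (J l)" if "l \<in> L" for l unfolding J_def by (rule choi_psd[OF cp[OF that] dC])
  have tIm: "Im (t l) = 0" and tRe: "Re (t l) \<ge> 0" if "l \<in> L" for l
    unfolding t_def using psd_trace[OF Jpsd[OF that]] by auto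
  have treal: "t l = complex_of_real (Re (t l))" if "l \<in> L" for l
    using tIm[OF that] by (simp add: complex_eq_iff)
  have tpsum: "mtrace (msum dB dB (\<lambda>l. \<Lambda>s l X) L) = mtrace X" if "X \<in> carrier_mat dC dC" for X
    using chsum that unfolding channel_def by auto
  have sum_t: "(\<Sum>l\<in>L. t l) = 1"
  proof -
    have "(\<Sum>l\<in>L. t l) = (\<Sum>l\<in>L. \<Sum>c<dC. mtrace (\<Lambda>s l (blk dC (max_ent dC) c c)))"
      unfolding t_def J_def by (intro sum.cong refl) (rule mtrace_choi[OF lin])
    also have "\<dots> = (\<Sum>c<dC. \<Sum>l\<in>L. mtrace (\<Lambda>s l (blk dC (max_ent dC) c c)))" by (rule sum.swap)
    also have "\<dots> = (\<Sum>c<dC. mtrace (msum dB dB (\<lambda>l. \<Lambda>s l (blk dC (max_ent dC) c c)) L))"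
      by (intro sum.cong refl mtrace_msum[symmetric] Lcar) auto
    also have "\<dots> = (\<Sum>c<dC. mtrace (blk dC (max_ent dC) c c))"
      by (intro sum.cong refl tpsum) simp
    also have "\<dots> = (\<Sum>c<dC. 1 / of_nat dC)" by (intro sum.cong refl) (simp add: mtrace_blk_max_ent)
    finally show ?thesis using dC by simp
  qed
  let ?N = "dC * (dA * dB)"
  have choi_eq: "choi dC (dA * dB) \<Lambda>AB = msum ?N ?N (\<lambda>l. prod_A_BC dA dB dC (\<sigma> l) (J l)) L"
  proof (rule eq_matI)
    fix r s assume "r < dim_row (msum ?N ?N (\<lambda>l. prod_A_BC dA dB dC (\<sigma> l) (J l)) L)"
      "s < dim_col (msum ?N ?N (\<lambda>l. prod_A_BC dA dB dC (\<sigma> l) (J l)) L)"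
    hence rs: "r < ?N" "s < ?N" by auto
    obtain c y where c: "c < dC" "y < dA * dB" "r = c * (dA * dB) + y" using idx_decomp[OF rs(1)] .
    obtain c' y' where c': "c' < dC" "y' < dA * dB" "s = c' * (dA * dB) + y'" using idx_decomp[OF rs(2)] .
    have ym: "y mod dB < dB" "y' mod dB < dB" using dB by auto
    have "choi dC (dA * dB) \<Lambda>AB $$ (r, s) = \<Lambda>AB (blk dC (max_ent dC) c c') $$ (y, y')"
      unfolding c(3) c'(3) by (rule choi_index[OF c(1) c'(1) c(2) c'(2)])
    also have "\<dots> = (\<Sum>l\<in>L. kron (\<sigma> l) (\<Lambda>s l (blk dC (max_ent dC) c c')) $$ (y, y'))"
      using eq c(2) c'(2) by simp
    also have "\<dots> = (\<Sum>l\<in>L. \<sigma> l $$ (y div dB, y' div dB) * \<Lambda>s l (blk dC (max_ent dC) c c') $$ (y mod dB, y' mod dB))"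
      by (intro sum.cong refl kron_index[OF scar Lcar c(2) c'(2)]) auto
    also have "\<dots> = (\<Sum>l\<in>L. prod_A_BC dA dB dC (\<sigma> l) (J l) $$ (r, s))"
      unfolding c(3) c'(3) prod_index[OF c(1) c'(1) c(2) c'(2)] J_def choi_index[OF c(1) c'(1) ym] ..
    also have "\<dots> = msum ?N ?N (\<lambda>l. prod_A_BC dA dB dC (\<sigma> l) (J l)) L $$ (r, s)"
      using rs by simp
    finally show "choi dC (dA * dB) \<Lambda>AB $$ (r, s) = msum ?N ?N (\<lambda>l. prod_A_BC dA dB dC (\<sigma> l) (J l)) L $$ (r, s)" .
  qed auto
  define K where "K = {l \<in> L. t l \<noteq> 0}"
  define p where "p = (\<lambda>l. Re (t l))"
  define \<omega> where "\<omega> = (\<lambda>l. (1 / t l) \<cdot>\<^sub>m J l)"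
  have KL: "K \<subseteq> L" unfolding K_def by auto
  have finK: "finite K" using finL KL finite_subset by blast
  have J0: "J l = 0\<^sub>m (dC * dB) (dC * dB)" if "l \<in> L" "l \<notin> K" for l
    using psd_trace_zero[OF Jpsd[OF that(1)]] that unfolding K_def t_def by auto
  have sumK: "(\<Sum>l\<in>K. t l) = 1"
  proof -
    have "(\<Sum>l\<in>K. t l) = (\<Sum>l\<in>L. t l)"
      by (rule sum.mono_neutral_left[OF finL KL]) (auto simp: K_def)
    thus ?thesis using sum_t by simp
  qed
  have sep1: "(\<Sum>k\<in>K. p k) = 1"
  proof -
    have "(\<Sum>k\<in>K. p k) = Re (\<Sum>k\<in>K. t k)" unfolding p_def Re_sum ..
    thus ?thesis using sumK by simp
  qed
  have dens\<omega>: "density (dC * dB) (\<omega> k)" if "k \<in> K" for k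
  proof -
    have kL: "k \<in> L" using that KL by auto
    have "1 / t k = complex_of_real (1 / Re (t k))" by (subst treal[OF kL]) simp
    hence o: "\<omega> k = complex_of_real (1 / Re (t k)) \<cdot>\<^sub>m J k" unfolding \<omega>_def by simp
    have "psd (dC * dB) (\<omega> k)" unfolding o by (rule psd_scale[OF Jpsd[OF kL]]) (use tRe[OF kL] in simp)
    moreover have "mtrace (\<omega> k) = 1"
      unfolding \<omega>_def using that unfolding K_def
      by (subst mtrace_scale[of _ "dC * dB"]) (auto simp: t_def choi_carrier J_def)
    ultimately show ?thesis unfolding density_def by auto
  qed
  have rho: "choi dC (dA * dB) \<Lambda>AB = msum ?N ?N (\<lambda>k. complex_of_real (p k) \<cdot>\<^sub>m prod_A_BC dA dB dC (\<sigma> k) (\<omega> k)) K"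
  proof (rule eq_matI)
    fix r s assume "r < dim_row (msum ?N ?N (\<lambda>k. complex_of_real (p k) \<cdot>\<^sub>m prod_A_BC dA dB dC (\<sigma> k) (\<omega> k)) K)"
      "s < dim_col (msum ?N ?N (\<lambda>k. complex_of_real (p k) \<cdot>\<^sub>m prod_A_BC dA dB dC (\<sigma> k) (\<omega> k)) K)"
    hence rs: "r < ?N" "s < ?N" by auto
    obtain c y where c: "c < dC" "y < dA * dB" "r = c * (dA * dB) + y" using idx_decomp[OF rs(1)] .
    obtain c' y' where c': "c' < dC" "y' < dA * dB" "s = c' * (dA * dB) + y'" using idx_decomp[OF rs(2)] .
    have ym: "c * dB + y mod dB < dC * dB" "c' * dB + y' mod dB < dC * dB" using dB c c' by (auto intro: idx_lt)
    have "choi dC (dA * dB) \<Lambda>AB $$ (r, s) = (\<Sum>l\<in>L. prod_A_BC dA dB dC (\<sigma> l) (J l) $$ (r, s))"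
      unfolding choi_eq using rs by simp
    also have "\<dots> = (\<Sum>l\<in>K. prod_A_BC dA dB dC (\<sigma> l) (J l) $$ (r, s))"
      by (rule sum.mono_neutral_right[OF finL KL])
         (auto simp: J0 c(3) c'(3) prod_index[OF c(1) c'(1) c(2) c'(2)] ym)
    also have "\<dots> = (\<Sum>k\<in>K. (complex_of_real (p k) \<cdot>\<^sub>m prod_A_BC dA dB dC (\<sigma> k) (\<omega> k)) $$ (r, s))"
    proof (intro sum.cong refl)
      fix k assume k: "k \<in> K"
      hence kL: "k \<in> L" and tk: "t k \<noteq> 0" using KL K_def by auto
      have pk: "complex_of_real (p k) = t k" unfolding p_def using treal[OF kL] by simp
      show "prod_A_BC dA dB dC (\<sigma> k) (J k) $$ (r, s) = (complex_of_real (p k) \<cdot>\<^sub>m prod_A_BC dA dB dC (\<sigma> k) (\<omega> k)) $$ (r, s)"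
        using rs tk ym unfolding pk c(3) c'(3)
        by (simp add: prod_index[OF c(1) c'(1) c(2) c'(2)] \<omega>_def J_def)
    qed
    also have "\<dots> = msum ?N ?N (\<lambda>k. complex_of_real (p k) \<cdot>\<^sub>m prod_A_BC dA dB dC (\<sigma> k) (\<omega> k)) K $$ (r, s)"
      using rs by simp
    finally show "choi dC (dA * dB) \<Lambda>AB $$ (r, s) = msum ?N ?N (\<lambda>k. complex_of_real (p k) \<cdot>\<^sub>m prod_A_BC dA dB dC (\<sigma> k) (\<omega> k)) K $$ (r, s)" .
  qed auto
  show ?thesis unfolding separable_A_BC_def
    apply (rule exI[of _ K], rule exI[of _ p], rule exI[of _ \<sigma>], rule exI[of _ \<omega>])
    using finK sep1 dens\<omega> dens KL rho tRe unfolding p_def by auto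
qed



lemma reorder3:
  "(\<Sum>c\<in>C. \<Sum>c'\<in>D. \<Sum>k\<in>K. T c c' k) = (\<Sum>k\<in>K. \<Sum>c\<in>C. \<Sum>c'\<in>D. (T c c' k :: 'a::comm_monoid_add))"
  by (simp add: sum.cartesian_product, rule sum.reindex_bij_witness[where i = "\<lambda>(k,c,c'). (c,c',k)" and j = "\<lambda>(c,c',k). (k,c,c')"]) auto

lemma backward:
  fixes dA dB dC :: nat and \<Lambda>AB \<Lambda>B :: "complex mat \<Rightarrow> complex mat"
  assumes dA: "dA > 0" and dB: "dB > 0" and dC: "dC > 0"
    and ext: "channel_extension dA dB dC \<Lambda>AB \<Lambda>B"
    and sep: "separable_A_BC dA dB dC (choi dC (dA * dB) \<Lambda>AB)"
  shows "incoherent_extension dA dB dC \<Lambda>AB"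
proof -
  let ?Y = "dA * dB"
  let ?N = "dC * (dA * dB)"
  obtain K :: "nat set" and p \<tau> \<omega> where finK: "finite K" and pnn: "\<forall>k\<in>K. p k \<ge> (0::real)"
    and dens: "\<forall>k\<in>K. density dA (\<tau> k) \<and> density (dC * dB) (\<omega> k)"
    and rho: "choi dC (dA * dB) \<Lambda>AB = msum ?N ?N (\<lambda>k. complex_of_real (p k) \<cdot>\<^sub>m prod_A_BC dA dB dC (\<tau> k) (\<omega> k)) K"
    using sep unfolding separable_A_BC_def by blast
  have chAB: "channel dC ?Y \<Lambda>AB" and chB: "channel dC dB \<Lambda>B"
    and ptr: "\<And>X. X \<in> carrier_mat dC dC \<Longrightarrow> ptrace_first dA dB (\<Lambda>AB X) = \<Lambda>B X"
    using ext unfolding channel_extension_def by auto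
  have linAB: "lin_map dC ?Y \<Lambda>AB" using chAB unfolding channel_def completely_positive_def by auto
  have tcar: "\<tau> k \<in> carrier_mat dA dA" if "k \<in> K" for k using dens that density_carrier by blast
  have ocar: "\<omega> k \<in> carrier_mat (dC * dB) (dC * dB)" if "k \<in> K" for k using dens that density_carrier by blast
  have ttr: "(\<Sum>a<dA. \<tau> k $$ (a,a)) = 1" if "k \<in> K" for k
    using dens that tcar[OF that] unfolding density_def mtrace_def by auto
  define W where "W = (\<lambda>k. complex_of_real (real dC * p k) \<cdot>\<^sub>m \<omega> k)"
  define \<Lambda>s where "\<Lambda>s = (\<lambda>k. cinv dC dB (W k))"
  have Wpsd: "psd (dC * dB) (W k)" if "k \<in> K" for k
    unfolding W_def using dens pnn that by (intro psd_scale) (auto simp: density_def)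
  have rho_ent: "choi dC ?Y \<Lambda>AB $$ (c * ?Y + y, c' * ?Y + y') =
      (\<Sum>k\<in>K. complex_of_real (p k) * (\<tau> k $$ (y div dB, y' div dB) * \<omega> k $$ (c * dB + y mod dB, c' * dB + y' mod dB)))"
    if c: "c < dC" "c' < dC" "y < ?Y" "y' < ?Y" for c c' y y'
  proof -
    have lt: "c * ?Y + y < ?N" "c' * ?Y + y' < ?N" using c by (auto intro: idx_lt)
    show ?thesis unfolding rho using lt by (simp add: prod_index[OF c])
  qed
  have incoh: "\<Lambda>AB X = msum ?Y ?Y (\<lambda>k. kron (\<tau> k) (\<Lambda>s k X)) K" if X: "X \<in> carrier_mat dC dC" for X
  proof (rule eq_matI)
    fix y y' assume "y < dim_row (msum ?Y ?Y (\<lambda>k. kron (\<tau> k) (\<Lambda>s k X)) K)"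
      "y' < dim_col (msum ?Y ?Y (\<lambda>k. kron (\<tau> k) (\<Lambda>s k X)) K)"
    hence yy: "y < ?Y" "y' < ?Y" by auto
    have ym: "y mod dB < dB" "y' mod dB < dB" using dB by auto
    have "\<Lambda>AB X $$ (y, y') = (\<Sum>c<dC. \<Sum>c'<dC. X $$ (c,c') * of_nat dC * choi dC ?Y \<Lambda>AB $$ (c * ?Y + y, c' * ?Y + y'))"
      by (subst recon[OF linAB X]) (use yy in simp)
    also have "\<dots> = (\<Sum>c<dC. \<Sum>c'<dC. \<Sum>k\<in>K. X $$ (c,c') * of_nat dC * (complex_of_real (p k) *
        (\<tau> k $$ (y div dB, y' div dB) * \<omega> k $$ (c * dB + y mod dB, c' * dB + y' mod dB))))"
      by (intro sum.cong refl) (simp add: rho_ent yy sum_distrib_left)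
    also have "\<dots> = (\<Sum>k\<in>K. \<Sum>c<dC. \<Sum>c'<dC. X $$ (c,c') * of_nat dC * (complex_of_real (p k) *
        (\<tau> k $$ (y div dB, y' div dB) * \<omega> k $$ (c * dB + y mod dB, c' * dB + y' mod dB))))"
      by (rule reorder3)
    also have "\<dots> = (\<Sum>k\<in>K. kron (\<tau> k) (\<Lambda>s k X) $$ (y, y'))"
    proof (rule sum.cong[OF refl])
      fix k assume k: "k \<in> K"
      have Wi: "W k $$ (c * dB + y mod dB, c' * dB + y' mod dB) = complex_of_real (real dC * p k) * \<omega> k $$ (c * dB + y mod dB, c' * dB + y' mod dB)"
        if "c < dC" "c' < dC" for c c'
        using ocar[OF k] that ym unfolding W_def by (simp add: idx_lt)
      have "kron (\<tau> k) (\<Lambda>s k X) $$ (y, y') = \<tau> k $$ (y div dB, y' div dB) * \<Lambda>s k X $$ (y mod dB, y' mod dB)"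
        by (rule kron_index[OF tcar[OF k] _ yy]) (simp add: \<Lambda>s_def)
      also have "\<dots> = \<tau> k $$ (y div dB, y' div dB) * (\<Sum>c<dC. \<Sum>c'<dC. X $$ (c,c') * W k $$ (c * dB + y mod dB, c' * dB + y' mod dB))"
        unfolding \<Lambda>s_def cinv_def using ym by simp
      also have "\<dots> = (\<Sum>c<dC. \<Sum>c'<dC. X $$ (c,c') * of_nat dC * (complex_of_real (p k) *
        (\<tau> k $$ (y div dB, y' div dB) * \<omega> k $$ (c * dB + y mod dB, c' * dB + y' mod dB))))"
        by (simp add: sum_distrib_left Wi algebra_simps)
      finally show "(\<Sum>c<dC. \<Sum>c'<dC. X $$ (c,c') * of_nat dC * (complex_of_real (p k) *
        (\<tau> k $$ (y div dB, y' div dB) * \<omega> k $$ (c * dB + y mod dB, c' * dB + y' mod dB)))) =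
        kron (\<tau> k) (\<Lambda>s k X) $$ (y, y')" by simp
    qed
    also have "\<dots> = msum ?Y ?Y (\<lambda>k. kron (\<tau> k) (\<Lambda>s k X)) K $$ (y, y')" using yy by simp
    finally show "\<Lambda>AB X $$ (y, y') = msum ?Y ?Y (\<lambda>k. kron (\<tau> k) (\<Lambda>s k X)) K $$ (y, y')" .
  qed (use linAB X in \<open>auto simp: lin_map_def\<close>)
  have sumB: "\<Lambda>B X = msum dB dB (\<lambda>k. \<Lambda>s k X) K" if X: "X \<in> carrier_mat dC dC" for X
  proof (rule eq_matI)
    fix b b' assume "b < dim_row (msum dB dB (\<lambda>k. \<Lambda>s k X) K)" "b' < dim_col (msum dB dB (\<lambda>k. \<Lambda>s k X) K)"
    hence bb: "b < dB" "b' < dB" by auto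
    have "\<Lambda>B X $$ (b, b') = ptrace_first dA dB (\<Lambda>AB X) $$ (b, b')" using ptr[OF X] by simp
    also have "\<dots> = (\<Sum>a<dA. \<Lambda>AB X $$ (a * dB + b, a * dB + b'))" unfolding ptrace_first_def using bb by simp
    also have "\<dots> = (\<Sum>a<dA. \<Sum>k\<in>K. \<tau> k $$ (a, a) * \<Lambda>s k X $$ (b, b'))"
    proof (rule sum.cong[OF refl])
      fix a assume a: "a \<in> {..<dA}"
      have lt: "a * dB + b < ?Y" "a * dB + b' < ?Y" using a bb by (auto intro: idx_lt)
      show "\<Lambda>AB X $$ (a * dB + b, a * dB + b') = (\<Sum>k\<in>K. \<tau> k $$ (a, a) * \<Lambda>s k X $$ (b, b'))"
        unfolding incoh[OF X] using lt bb
        by (simp add: kron_index[OF tcar _ lt] \<Lambda>s_def)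
    qed
    also have "\<dots> = (\<Sum>k\<in>K. (\<Sum>a<dA. \<tau> k $$ (a, a)) * \<Lambda>s k X $$ (b, b'))"
      by (subst sum.swap) (simp add: sum_distrib_right)
    also have "\<dots> = (\<Sum>k\<in>K. \<Lambda>s k X $$ (b, b'))" by (intro sum.cong refl) (simp add: ttr)
    also have "\<dots> = msum dB dB (\<lambda>k. \<Lambda>s k X) K $$ (b, b')" using bb by simp
    finally show "\<Lambda>B X $$ (b, b') = msum dB dB (\<lambda>k. \<Lambda>s k X) K $$ (b, b')" .
  qed (use chB X in \<open>auto simp: channel_def completely_positive_def lin_map_def\<close>)
  have inst: "instrument dC dB K \<Lambda>s"
    unfolding instrument_def
  proof (intro conjI ballI finK)
    fix k assume "k \<in> K"
    thus "completely_positive dC dB (\<Lambda>s k)" unfolding \<Lambda>s_def by (intro cinv_cp Wpsd)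
  next
    show "channel dC dB (\<lambda>X. msum dB dB (\<lambda>k. \<Lambda>s k X) K)"
      by (rule channel_cong[OF sumB chB])
  qed
  show ?thesis unfolding incoherent_extension_def
    using inst dens incoh by blast
qed


theorem theorem2:
  fixes dA dB dC :: nat
    and \<Lambda>AB \<Lambda>B :: "complex mat \<Rightarrow> complex mat"
  assumes "dA > 0" and "dB > 0" and "dC > 0"
    and "channel_extension dA dB dC \<Lambda>AB \<Lambda>B"
  shows "incoherent_extension dA dB dC \<Lambda>AB \<longleftrightarrow> separable_A_BC dA dB dC (choi dC (dA * dB) \<Lambda>AB)"
  using forward[OF assms] backward[OF assms] by blast

end
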